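(* Let $\alpha \ge 1$. Suppose there exists a polynomial-time $\alpha$-approximation algorithm for the Vector Bin Packing Problem (VBPP) with unit bin capacities. Then there exists an $\alpha\sqrt{d}$-approximation algorithm for the Bin Packing Problem with Scenarios (BPPS), where $d$ is the number of scenarios of the BPPS instance.
   Context: BPPS: given a number $d$ of scenarios, a set $\mathcal{I}=\{1,\dots,n\}$ of items, each item $i$ having a size $s_i\in\mathbb{Q}_+$ and a set of scenarios $\mathcal{K}_i\subseteq\{1,\dots,d\}$, and unlimited identical bins of capacity $1$ (instances are normalized so that the capacity is $1$). For each scenario $k$, $S_k=\{i\in\mathcal{I}: k\in\mathcal{K}_i\}$. A solution is a partition $\mathcal{B}$ of $\mathcal{I}$ such that for every part $B\in\mathcal{B}$ and every scenario $k$, $\sum_{i\in B\cap S_k}s_i\le 1$. The objective is to minimize $\mathrm{val}_{BPPS}(\mathcal{B})=\max_{k\in[d]}|\{B\in\mathcal{B}: B\cap S_k\neq\emptyset\}|$. VBPP: given $d$ resources and items $i$ with consumption vectors $s_i\in\mathbb{Q}_+^d$, and bins of capacity $1$ in each resource, a solution is a partition $\mathcal{B}$ of the items such that for each part $B$ and resource $k$, $\sum_{i\in B}s_{ik}\le 1$; the objective is to minimize $\mathrm{val}_{VBPP}(\mathcal{B})=|\mathcal{B}|$. An $\alpha$-approximation algorithm for a minimization problem returns, for every instance, a feasible solution of value at most $\alpha$ times the optimum. *)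

theory Defs
  imports Complex_Main "HOL-Library.Disjoint_Sets"
begin

definition bpps_valid :: "nat \<Rightarrow> nat \<Rightarrow> (nat \<Rightarrow> rat) \<Rightarrow> (nat \<Rightarrow> nat set) \<Rightarrow> bool" where
  "bpps_valid d n s K \<longleftrightarrow> d \<ge> 1 \<and> (\<forall>i<n. 0 \<le> s i \<and> s i \<le> 1 \<and> K i \<subseteq> {..<d})"

definition scen_items :: "nat \<Rightarrow> (nat \<Rightarrow> nat set) \<Rightarrow> nat \<Rightarrow> nat set" where
  "scen_items n K k = {i. i < n \<and> k \<in> K i}"

definition bpps_feasible ::
  "nat \<Rightarrow> nat \<Rightarrow> (nat \<Rightarrow> rat) \<Rightarrow> (nat \<Rightarrow> nat set) \<Rightarrow> nat set set \<Rightarrow> bool" where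
  "bpps_feasible d n s K P \<longleftrightarrow> partition_on {..<n} P \<and>
     (\<forall>B\<in>P. \<forall>k<d. (\<Sum>i\<in>B \<inter> scen_items n K k. s i) \<le> 1)"

definition bpps_val :: "nat \<Rightarrow> nat \<Rightarrow> (nat \<Rightarrow> nat set) \<Rightarrow> nat set set \<Rightarrow> nat" where
  "bpps_val d n K P = Max ((\<lambda>k. card {B \<in> P. B \<inter> scen_items n K k \<noteq> {}}) ` {..<d})"

definition bpps_approx ::
  "(nat \<Rightarrow> real) \<Rightarrow> (nat \<Rightarrow> nat \<Rightarrow> (nat \<Rightarrow> rat) \<Rightarrow> (nat \<Rightarrow> nat set) \<Rightarrow> nat set set) \<Rightarrow> bool" where
  "bpps_approx r Alg \<longleftrightarrow> (\<forall>d n s K. bpps_valid d n s K \<longrightarrow>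
      bpps_feasible d n s K (Alg d n s K) \<and>
      (\<forall>P. bpps_feasible d n s K P \<longrightarrow>
         real (bpps_val d n K (Alg d n s K)) \<le> r d * real (bpps_val d n K P)))"

definition vbpp_valid :: "nat \<Rightarrow> nat \<Rightarrow> (nat \<Rightarrow> nat \<Rightarrow> rat) \<Rightarrow> bool" where
  "vbpp_valid d n v \<longleftrightarrow> (\<forall>i<n. \<forall>k<d. 0 \<le> v i k \<and> v i k \<le> 1)"

definition vbpp_feasible :: "nat \<Rightarrow> nat \<Rightarrow> (nat \<Rightarrow> nat \<Rightarrow> rat) \<Rightarrow> nat set set \<Rightarrow> bool" where
  "vbpp_feasible d n v P \<longleftrightarrow> partition_on {..<n} P \<and>
     (\<forall>B\<in>P. \<forall>k<d. (\<Sum>i\<in>B. v i k) \<le> 1)"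

definition vbpp_val :: "nat set set \<Rightarrow> nat" where
  "vbpp_val P = card P"

definition vbpp_approx ::
  "real \<Rightarrow> (nat \<Rightarrow> nat \<Rightarrow> (nat \<Rightarrow> nat \<Rightarrow> rat) \<Rightarrow> nat set set) \<Rightarrow> bool" where
  "vbpp_approx \<alpha> Alg \<longleftrightarrow> (\<forall>d n v. vbpp_valid d n v \<longrightarrow>
      vbpp_feasible d n v (Alg d n v) \<and>
      (\<forall>P. vbpp_feasible d n v P \<longrightarrow>
         real (vbpp_val (Alg d n v)) \<le> \<alpha> * real (vbpp_val P)))"

text \<open>Item i consumes s i in resource k if k is one of its scenarios, 0 otherwise.
  A VBPP solution of this instance is used unchanged as the BPPS solution.\<close>
definition vbpp_of :: "(nat \<Rightarrow> rat) \<Rightarrow> (nat \<Rightarrow> nat set) \<Rightarrow> nat \<Rightarrow> nat \<Rightarrow> rat" where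
  "vbpp_of s K = (\<lambda>i k. if k \<in> K i then s i else 0)"

end

theory Submission
  imports Defs
begin

lemma sum_vbpp:
  assumes "B \<subseteq> {..<n}"
  shows "(\<Sum>i\<in>B. vbpp_of s K i k) = (\<Sum>i\<in>B \<inter> scen_items n K k. s i)"
proof -
  have fin: "finite B" using assms finite_subset by blast
  have "B \<inter> scen_items n K k = {i\<in>B. k \<in> K i}" using assms by (auto simp: scen_items_def)
  then show ?thesis using sum.inter_filter[OF fin, of s "\<lambda>i. k \<in> K i"]
    by (simp add: vbpp_of_def)
qed

lemma feas_equiv:
  "bpps_feasible d n s K P \<longleftrightarrow> vbpp_feasible d n (vbpp_of s K) P"
proof -
  have sub: "partition_on {..<n} P \<Longrightarrow> B \<in> P \<Longrightarrow> B \<subseteq> {..<n}" for B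
    using partition_onD1 by blast
  show ?thesis unfolding bpps_feasible_def vbpp_feasible_def
  proof (intro iffI conjI ballI allI impI; (elim conjE)?)
    fix B k assume "partition_on {..<n} P" "B \<in> P" "k < d"
      and h: "\<forall>B\<in>P. \<forall>k<d. sum s (B \<inter> scen_items n K k) \<le> 1"
    then show "(\<Sum>i\<in>B. vbpp_of s K i k) \<le> 1" using sum_vbpp[OF sub] by simp
  next
    fix B k assume "partition_on {..<n} P" "B \<in> P" "k < d"
      and h: "\<forall>B\<in>P. \<forall>k<d. (\<Sum>i\<in>B. vbpp_of s K i k) \<le> 1"
    then show "sum s (B \<inter> scen_items n K k) \<le> 1" using sum_vbpp[OF sub] by simp
  qed simp_all
qed

lemma val_le_card:
  assumes "d \<ge> 1" "finite Q"
  shows "bpps_val d n K Q \<le> card Q"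
proof -
  have "card {B \<in> Q. B \<inter> scen_items n K k \<noteq> {}} \<le> card Q" for k
    using assms(2) by (intro card_mono) auto
  moreover have "0 \<in> {..<d}" using assms(1) by simp
  then have "{..<d} \<noteq> {}" by blast
  ultimately show ?thesis unfolding bpps_val_def by (subst Max_le_iff) (auto simp: lessThan_empty_iff)
qed

lemma card_offdiag:
  assumes "finite A"
  shows "card {(x,y). x \<in> A \<and> y \<in> A \<and> x \<noteq> y} = card A * card A - card A"
proof -
  have e: "{(x,y). x \<in> A \<and> y \<in> A \<and> x \<noteq> y} = A \<times> A - (\<lambda>x. (x,x)) ` A" by auto
  have "card ((\<lambda>x. (x,x)) ` A) = card A" by (intro card_image) (auto simp: inj_on_def)
  moreover have "(\<lambda>x. (x,x)) ` A \<subseteq> A \<times> A" by auto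
  ultimately show ?thesis unfolding e using assms
    by (simp add: card_Diff_subset card_cartesian_product)
qed

lemma pair_count:
  fixes Q :: "'a set" and meet :: "'a \<Rightarrow> nat \<Rightarrow> bool"
  assumes fin: "finite Q"
    and cnt: "\<And>k. k < d \<Longrightarrow> card {B \<in> Q. meet B k} \<le> m"
    and pw: "\<And>B B'. B \<in> Q \<Longrightarrow> B' \<in> Q \<Longrightarrow> B \<noteq> B' \<Longrightarrow> \<exists>k<d. meet B k \<and> meet B' k"
  shows "card Q * card Q - card Q \<le> d * (m * m - m)"
proof -
  define Qk where "Qk k = {B \<in> Q. meet B k}" for k
  have sub: "{(x,y). x \<in> Q \<and> y \<in> Q \<and> x \<noteq> y} \<subseteq>
     (\<Union>k\<in>{..<d}. {(x,y). x \<in> Qk k \<and> y \<in> Qk k \<and> x \<noteq> y})"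
    using pw unfolding Qk_def by fastforce
  have finU: "finite (\<Union>k\<in>{..<d}. {(x,y). x \<in> Qk k \<and> y \<in> Qk k \<and> x \<noteq> y})"
    by (rule finite_subset[of _ "Q \<times> Q"]) (use fin in \<open>auto simp: Qk_def\<close>)
  have finQk: "finite (Qk k)" for k using fin by (simp add: Qk_def)
  have each: "card {(x,y). x \<in> Qk k \<and> y \<in> Qk k \<and> x \<noteq> y} \<le> m * m - m" if "k < d" for k
  proof -
    have c: "card (Qk k) \<le> m" using cnt that by (simp add: Qk_def)
    have "card (Qk k) * card (Qk k) - card (Qk k) = card (Qk k) * (card (Qk k) - 1)"
      by (simp add: diff_mult_distrib2)
    also have "\<dots> \<le> m * (m - 1)" using c by (intro mult_mono) auto
    also have "\<dots> = m * m - m" by (simp add: diff_mult_distrib2)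
    finally show ?thesis using card_offdiag[OF finQk] by simp
  qed
  have "card Q * card Q - card Q = card {(x,y). x \<in> Q \<and> y \<in> Q \<and> x \<noteq> y}"
    using card_offdiag[OF fin] by simp
  also have "\<dots> \<le> card (\<Union>k\<in>{..<d}. {(x,y). x \<in> Qk k \<and> y \<in> Qk k \<and> x \<noteq> y})"
    by (rule card_mono[OF finU sub])
  also have "\<dots> \<le> (\<Sum>k\<in>{..<d}. card {(x,y). x \<in> Qk k \<and> y \<in> Qk k \<and> x \<noteq> y})"
    by (rule card_UN_le) simp
  also have "\<dots> \<le> (\<Sum>k\<in>{..<d}. m * m - m)" by (rule sum_mono) (use each in auto)
  also have "\<dots> = d * (m * m - m)" by simp
  finally show ?thesis .
qed

lemma real_ineq:
  fixes N m d :: nat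
  assumes "N * N - N \<le> d * (m * m - m)" "m \<ge> 1" "d \<ge> 1"
  shows "real N \<le> sqrt (real d) * real m"
proof (rule ccontr)
  assume "\<not> ?thesis"
  hence lt: "sqrt (real d) * real m < real N" by simp
  define x where "x = sqrt (real d) * real m"
  have sd1: "sqrt (real d) \<ge> 1" using assms by simp
  have sdd: "sqrt (real d) \<le> real d"
  proof -
    have "sqrt (real d) * 1 \<le> sqrt (real d) * sqrt (real d)" using sd1 by (intro mult_left_mono) auto
    then show ?thesis by simp
  qed
  have x1: "x \<ge> 1" using sd1 assms unfolding x_def
    using mult_mono[OF sd1, of 1 "real m"] by simp
  have xN: "x < real N" using lt x_def by simp
  have "x * (x - 1) < real N * (real N - 1)"
  proof -
    have "real N * (real N - 1) - x * (x - 1) = (real N - x) * (real N + x - 1)" by (simp add: algebra_simps)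
    moreover have "(real N - x) * (real N + x - 1) > 0" using xN x1 by (intro mult_pos_pos) auto
    ultimately show ?thesis by linarith
  qed
  moreover have "x * (x - 1) = real d * real m * real m - sqrt (real d) * real m"
    unfolding x_def by (simp add: algebra_simps)
  moreover have "sqrt (real d) * real m \<le> real d * real m" using sdd by (simp add: mult_right_mono)
  moreover have "real N * (real N - 1) = real (N * N - N)" using xN x1
    by (simp add: of_nat_diff algebra_simps)
  moreover have "real (N * N - N) \<le> real d * (real m * real m - real m)"
  proof -
    have "real (N * N - N) \<le> real (d * (m * m - m))" using assms(1) by linarith
    also have "\<dots> = real d * (real m * real m - real m)" using assms(2)
      by (simp add: of_nat_diff)
    finally show ?thesis .
  qed
  ultimately show False by (simp add: algebra_simps)
qed


lemma merge:
  fixes Q :: "nat set set" and B1 B2 :: "nat set"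
  defines "Q' \<equiv> insert (B1 \<union> B2) (Q - {B1, B2})"
  assumes feas: "bpps_feasible d n s K Q" and b1: "B1 \<in> Q" and b2: "B2 \<in> Q" and ne: "B1 \<noteq> B2"
    and nomeet: "\<not> (\<exists>k<d. B1 \<inter> scen_items n K k \<noteq> {} \<and> B2 \<inter> scen_items n K k \<noteq> {})"
  shows "bpps_feasible d n s K Q'" "card Q' < card Q"
    "\<And>k. card {B \<in> Q'. B \<inter> scen_items n K k \<noteq> {}} \<le> card {B \<in> Q. B \<inter> scen_items n K k \<noteq> {}}"
proof -
  have part: "partition_on {..<n} Q" using feas by (simp add: bpps_feasible_def)
  have finQ: "finite Q" using finite_elements[OF _ part] by simp
  have disj: "\<And>X Y. X \<in> Q \<Longrightarrow> Y \<in> Q \<Longrightarrow> X \<noteq> Y \<Longrightarrow> X \<inter> Y = {}"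
    using partition_onD2[OF part] by (auto simp: disjoint_def)
  have nonempty: "\<And>X. X \<in> Q \<Longrightarrow> X \<noteq> {}" using partition_onD3[OF part] by auto
  have U: "\<Union>Q = {..<n}" using partition_onD1[OF part] by simp
  have notin: "B1 \<union> B2 \<notin> Q - {B1, B2}"
  proof
    assume "B1 \<union> B2 \<in> Q - {B1, B2}"
    then have "B1 \<union> B2 \<in> Q" "B1 \<union> B2 \<noteq> B1" by auto
    then have "(B1 \<union> B2) \<inter> B1 = {}" using disj b1 by blast
    then show False using nonempty[OF b1] by blast
  qed
  have "partition_on {..<n} Q'"
  proof (rule partition_onI)
    show "\<Union>Q' = {..<n}" using U b1 b2 unfolding Q'_def by blast
    show "{} \<notin> Q'" using nonempty b1 unfolding Q'_def by blast
    fix p q assume pq: "p \<in> Q'" "q \<in> Q'" "p \<noteq> q"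
    have dd: "X \<in> Q - {B1,B2} \<Longrightarrow> disjnt X (B1 \<union> B2)" for X
      using disj[of X B1] disj[of X B2] b1 b2 by (auto simp: disjnt_def)
    show "disjnt p q"
    proof (cases "p = B1 \<union> B2")
      case True
      then have "q \<in> Q - {B1, B2}" using pq unfolding Q'_def by blast
      then show ?thesis using dd True by (simp add: disjnt_sym)
    next
      case pF: False
      then have p: "p \<in> Q - {B1, B2}" using pq unfolding Q'_def by blast
      show ?thesis
      proof (cases "q = B1 \<union> B2")
        case True
        then show ?thesis using dd p by simp
      next
        case False
        then have "q \<in> Q" using pq unfolding Q'_def by blast
        then show ?thesis using p pq(3) disj by (simp add: disjnt_def)
      qed
    qed
  qed
  moreover have "\<forall>B\<in>Q'. \<forall>k<d. (\<Sum>i\<in>B \<inter> scen_items n K k. s i) \<le> 1"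
  proof (intro ballI allI impI)
    fix B k assume B: "B \<in> Q'" and k: "k < d"
    show "(\<Sum>i\<in>B \<inter> scen_items n K k. s i) \<le> 1"
    proof (cases "B = B1 \<union> B2")
      case True
      show ?thesis
      proof (cases "B1 \<inter> scen_items n K k = {}")
        case True
        then have "B \<inter> scen_items n K k = B2 \<inter> scen_items n K k" using \<open>B = B1 \<union> B2\<close> by blast
        then show ?thesis using feas b2 k by (simp add: bpps_feasible_def)
      next
        case False
        then have "B2 \<inter> scen_items n K k = {}" using nomeet k by blast
        then have "B \<inter> scen_items n K k = B1 \<inter> scen_items n K k" using \<open>B = B1 \<union> B2\<close> by blast
        then show ?thesis using feas b1 k by (simp add: bpps_feasible_def)
      qed
    next
      case False
      then have "B \<in> Q" using B unfolding Q'_def by blast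
      then show ?thesis using feas k by (simp add: bpps_feasible_def)
    qed
  qed
  ultimately show "bpps_feasible d n s K Q'" by (simp add: bpps_feasible_def)
  have "card Q' = card (Q - {B1, B2}) + 1" unfolding Q'_def using notin finQ by simp
  also have "card (Q - {B1, B2}) = card Q - 2" using finQ b1 b2 ne by (simp add: card_Diff_subset)
  finally have e: "card Q' = card Q - 2 + 1" .
  have "card {B1, B2} \<le> card Q" using finQ b1 b2 by (intro card_mono) auto
  then have "2 \<le> card Q" using ne by simp
  then show "card Q' < card Q" using e by linarith
  fix k
  define g where "g X = (if X \<in> {B1, B2} then B1 \<union> B2 else X)" for X
  have subg: "{B \<in> Q'. B \<inter> scen_items n K k \<noteq> {}} \<subseteq> g ` {B \<in> Q. B \<inter> scen_items n K k \<noteq> {}}"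
  proof
    fix B assume "B \<in> {B \<in> Q'. B \<inter> scen_items n K k \<noteq> {}}"
    then have B: "B \<in> Q'" "B \<inter> scen_items n K k \<noteq> {}" by auto
    show "B \<in> g ` {B \<in> Q. B \<inter> scen_items n K k \<noteq> {}}"
    proof (cases "B = B1 \<union> B2")
      case True
      then have "B1 \<inter> scen_items n K k \<noteq> {} \<or> B2 \<inter> scen_items n K k \<noteq> {}" using B by blast
      then show ?thesis using True b1 b2 unfolding g_def by (auto intro: image_eqI)
    next
      case False
      then have "B \<in> Q" "B \<notin> {B1, B2}" using B unfolding Q'_def by auto
      then show ?thesis using B unfolding g_def by (auto intro!: image_eqI[where x=B])
    qed
  qed
  then show "card {B \<in> Q'. B \<inter> scen_items n K k \<noteq> {}} \<le> card {B \<in> Q. B \<inter> scen_items n K k \<noteq> {}}"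
  proof -
    have f: "finite {B \<in> Q. B \<inter> scen_items n K k \<noteq> {}}" using finQ by simp
    from card_mono[OF finite_imageI[OF f, of g] subg] card_image_le[OF f, of g]
    show ?thesis by linarith
  qed
qed


theorem corollary1:
  fixes \<alpha> :: real
    and A :: "nat \<Rightarrow> nat \<Rightarrow> (nat \<Rightarrow> nat \<Rightarrow> rat) \<Rightarrow> nat set set"
  assumes "\<alpha> \<ge> 1"
    and "vbpp_approx \<alpha> A"
  shows "bpps_approx (\<lambda>d. \<alpha> * sqrt (real d)) (\<lambda>d n s K. A d n (vbpp_of s K))"
  unfolding bpps_approx_def
proof (intro allI impI conjI)
  fix d n s K assume valid: "bpps_valid d n s K"
  define v where "v = vbpp_of s K"
  have d1: "d \<ge> 1" using valid by (simp add: bpps_valid_def)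
  have vv: "vbpp_valid d n v" using valid
    by (auto simp: bpps_valid_def vbpp_valid_def v_def vbpp_of_def)
  have Afeas: "vbpp_feasible d n v (A d n v)" and Abound: "\<And>P. vbpp_feasible d n v P \<Longrightarrow>
      real (card (A d n v)) \<le> \<alpha> * real (card P)"
    using assms(2) vv by (auto simp: vbpp_approx_def vbpp_val_def)
  show "bpps_feasible d n s K (A d n (vbpp_of s K))" using Afeas by (simp add: feas_equiv v_def)
  fix P assume Pf: "bpps_feasible d n s K P"
  define cnt where "cnt Q k = card {B \<in> Q. B \<inter> scen_items n K k \<noteq> {}}" for Q :: "nat set set" and k
  define m where "m = bpps_val d n K P"
  have finP: "finite P" using Pf finite_elements[of "{..<n}" P] by (simp add: bpps_feasible_def)
  have Afin: "finite (A d n v)" using Afeas finite_elements[of "{..<n}"] by (simp add: vbpp_feasible_def)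
  have "0 \<in> {..<d}" using d1 by simp
  then have dne: "{..<d} \<noteq> {}" by blast
  have cntP: "cnt P k \<le> m" if "k < d" for k
    unfolding m_def bpps_val_def cnt_def using that by (intro Max_ge) auto
  show "real (bpps_val d n K (A d n (vbpp_of s K)))
        \<le> \<alpha> * sqrt (real d) * real (bpps_val d n K P)"
  proof (cases "m = 0")
    case True
    have "scen_items n K k = {}" if "k < d" for k
    proof -
      have "cnt P k = 0" using cntP[OF that] True by simp
      then have "\<forall>B\<in>P. B \<inter> scen_items n K k = {}" using finP by (simp add: cnt_def)
      moreover have "scen_items n K k \<subseteq> \<Union>P" using Pf partition_onD1[of "{..<n}" P]
        by (auto simp: bpps_feasible_def scen_items_def)
      ultimately show ?thesis by blast
    qed
    then have "bpps_val d n K (A d n (vbpp_of s K)) = 0"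
      unfolding bpps_val_def using dne by (simp add: Max_eq_iff)
    then show ?thesis using assms(1) by simp
  next
    case False
    define C where "C = {Q. bpps_feasible d n s K Q \<and> (\<forall>k<d. cnt Q k \<le> m)}"
    have "P \<in> C" using Pf cntP by (simp add: C_def)
    then obtain Q where QC: "Q \<in> C" and Qmin: "\<And>Q'. Q' \<in> C \<Longrightarrow> card Q \<le> card Q'"
      using ex_has_least_nat[of "\<lambda>Q. Q \<in> C" P card] by blast
    have Qf: "bpps_feasible d n s K Q" and Qc: "\<And>k. k < d \<Longrightarrow> cnt Q k \<le> m" using QC by (auto simp: C_def)
    have finQ: "finite Q" using Qf finite_elements[of "{..<n}" Q] by (simp add: bpps_feasible_def)
    have pw: "\<exists>k<d. B \<inter> scen_items n K k \<noteq> {} \<and> B' \<inter> scen_items n K k \<noteq> {}"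
      if "B \<in> Q" "B' \<in> Q" "B \<noteq> B'" for B B'
    proof (rule ccontr)
      assume na: "\<not> ?thesis"
      let ?Q' = "insert (B \<union> B') (Q - {B, B'})"
      have "?Q' \<in> C" using merge(1,3)[OF Qf that na] Qc unfolding C_def cnt_def
        by (auto intro: le_trans)
      then show False using merge(2)[OF Qf that na] Qmin by fastforce
    qed
    have "card Q * card Q - card Q \<le> d * (m * m - m)"
      by (rule pair_count[OF finQ, of d "\<lambda>B k. B \<inter> scen_items n K k \<noteq> {}" m])
         (use Qc pw in \<open>auto simp: cnt_def\<close>)
    then have cQ: "real (card Q) \<le> sqrt (real d) * real m" using real_ineq False d1 by simp
    have "real (bpps_val d n K (A d n v)) \<le> real (card (A d n v))"
      using val_le_card[OF d1 Afin] by simp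
    also have "\<dots> \<le> \<alpha> * real (card Q)" using Qf by (intro Abound) (simp add: feas_equiv v_def)
    also have "\<dots> \<le> \<alpha> * (sqrt (real d) * real m)" using cQ assms(1) by (intro mult_left_mono) auto
    finally show ?thesis by (simp add: v_def m_def mult.assoc)
  qed
qed

end
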